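(* Every finite group with nonabelian monolith is strongly verbally closed. Moreover, every such group $H$ is a retract of every finite group $G$ that contains $H$ and satisfies all identities of $H$.
   Context: The monolith of a group is the intersection of all its nonidentity normal subgroups. A subgroup $H$ of $G$ is a retract of $G$ if there is an endomorphism $\rho$ of $G$ with $\rho\circ\rho=\rho$ and $\rho(G)=H$. A subgroup $H$ of $G$ is verbally closed if every equation $w(x_1,\dots,x_n)=h$ with $w$ in a free group and $h\in H$ solvable in $G$ is solvable in $H$; algebraically closed if every finite system of equations with coefficients from $H$ solvable in $G$ is solvable in $H$. A group is strongly verbally closed if it is algebraically closed in every group containing it as a verbally closed subgroup. *)

theory Defs
  imports "HOL-Algebra.Algebra"
begin

text \<open>Letters of words over variables x_0, x_1, ... (index, exponent sign: True = +1,
  False = -1) possibly with constants (coefficients) from the group.\<close>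
datatype 'a letter = Var nat bool | Cst 'a

text \<open>Elements of the free group on x_0, x_1, ... are represented by (not necessarily
  reduced) group words; their value under an assignment does not depend on the
  representative.\<close>
type_synonym fword = "(nat \<times> bool) list"

fun eval_letter :: "('a, 'm) monoid_scheme \<Rightarrow> (nat \<Rightarrow> 'a) \<Rightarrow> 'a letter \<Rightarrow> 'a" where
  "eval_letter G f (Var i b) = (if b then f i else inv\<^bsub>G\<^esub> (f i))"
| "eval_letter G f (Cst c) = c"

definition eval_word :: "('a, 'm) monoid_scheme \<Rightarrow> (nat \<Rightarrow> 'a) \<Rightarrow> 'a letter list \<Rightarrow> 'a" where
  "eval_word G f w = foldr (\<lambda>l acc. eval_letter G f l \<otimes>\<^bsub>G\<^esub> acc) w \<one>\<^bsub>G\<^esub>"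

definition fword_letters :: "fword \<Rightarrow> 'a letter list" where
  "fword_letters w = map (\<lambda>(i, b). Var i b) w"

definition eval_fword :: "('a, 'm) monoid_scheme \<Rightarrow> (nat \<Rightarrow> 'a) \<Rightarrow> fword \<Rightarrow> 'a" where
  "eval_fword G f w = eval_word G f (fword_letters w)"

definition consts_of :: "'a letter list \<Rightarrow> 'a set" where
  "consts_of w = {c. Cst c \<in> set w}"

abbreviation subgrp :: "('a, 'm) monoid_scheme \<Rightarrow> 'a set \<Rightarrow> ('a, 'm) monoid_scheme" where
  "subgrp G H \<equiv> G\<lparr>carrier := H\<rparr>"

definition monolith :: "('a, 'm) monoid_scheme \<Rightarrow> 'a set" where
  "monolith G = carrier G \<inter> \<Inter> {N. N \<lhd> G \<and> N \<noteq> {\<one>\<^bsub>G\<^esub>}}"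

definition nonabelian_set :: "('a, 'm) monoid_scheme \<Rightarrow> 'a set \<Rightarrow> bool" where
  "nonabelian_set G A \<longleftrightarrow> (\<exists>x\<in>A. \<exists>y\<in>A. x \<otimes>\<^bsub>G\<^esub> y \<noteq> y \<otimes>\<^bsub>G\<^esub> x)"

definition verbally_closed :: "'a set \<Rightarrow> ('a, 'm) monoid_scheme \<Rightarrow> bool" where
  "verbally_closed H G \<longleftrightarrow>
     (\<forall>(w::fword) h. h \<in> H \<longrightarrow>
        (\<exists>f. (\<forall>i. f i \<in> carrier G) \<and> eval_fword G f w = h) \<longrightarrow>
        (\<exists>f. (\<forall>i. f i \<in> H) \<and> eval_fword G f w = h))"

definition algebraically_closed :: "'a set \<Rightarrow> ('a, 'm) monoid_scheme \<Rightarrow> bool" where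
  "algebraically_closed H G \<longleftrightarrow>
     (\<forall>S :: 'a letter list list. (\<forall>w\<in>set S. consts_of w \<subseteq> H) \<longrightarrow>
        (\<exists>f. (\<forall>i. f i \<in> carrier G) \<and> (\<forall>w\<in>set S. eval_word G f w = \<one>\<^bsub>G\<^esub>)) \<longrightarrow>
        (\<exists>f. (\<forall>i. f i \<in> H) \<and> (\<forall>w\<in>set S. eval_word G f w = \<one>\<^bsub>G\<^esub>)))"

definition satisfies_identities_of :: "('a, 'm) monoid_scheme \<Rightarrow> ('a, 'n) monoid_scheme \<Rightarrow> bool" where
  "satisfies_identities_of G K \<longleftrightarrow>
     (\<forall>w::fword. (\<forall>f. (\<forall>i. f i \<in> carrier K) \<longrightarrow> eval_fword K f w = \<one>\<^bsub>K\<^esub>) \<longrightarrow>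
        (\<forall>f. (\<forall>i. f i \<in> carrier G) \<longrightarrow> eval_fword G f w = \<one>\<^bsub>G\<^esub>))"

definition retract :: "'a set \<Rightarrow> ('a, 'm) monoid_scheme \<Rightarrow> bool" where
  "retract H G \<longleftrightarrow>
     (\<exists>\<rho> \<in> hom G G. (\<forall>x\<in>carrier G. \<rho> (\<rho> x) = \<rho> x) \<and> \<rho> ` carrier G = H)"

end

theory Submission
  imports Defs
begin

definition winv :: "fword \<Rightarrow> fword" where
  "winv w = rev (map (\<lambda>(i, b). (i, \<not> b)) w)"

lemma winv_set: "p \<in> set (winv w) \<Longrightarrow> fst p \<in> fst ` set w"
  unfolding winv_def by force

lemma winv_all [simp]: "(\<forall>p\<in>set (winv w). fst p < N) = (\<forall>p\<in>set w. fst p < N)"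
  unfolding winv_def by force

fun mv :: "'b letter list \<Rightarrow> nat" where
  "mv [] = 0"
| "mv (Var i b # w) = max (Suc i) (mv w)"
| "mv (Cst c # w) = mv w"

lemma mv_var: "Var i b \<in> set w \<Longrightarrow> i < mv w"
  by (induction w rule: mv.induct) auto

context group
begin

lemma ev_Nil [simp]: "eval_fword G f [] = \<one>"
  by (simp add: eval_fword_def eval_word_def fword_letters_def)

lemma ev_Cons [simp]:
  "eval_fword G f ((i, b) # w) = (if b then f i else inv (f i)) \<otimes> eval_fword G f w"
  by (simp add: eval_fword_def eval_word_def fword_letters_def)

lemma ev_closed [simp]: "(\<And>i. f i \<in> carrier G) \<Longrightarrow> eval_fword G f w \<in> carrier G"
  by (induction w) auto

lemma ev_append:
  assumes "\<And>i. f i \<in> carrier G"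
  shows "eval_fword G f (w @ w') = eval_fword G f w \<otimes> eval_fword G f w'"
  using assms by (induction w) (auto simp: m_assoc)

lemma ev_single: "f i \<in> carrier G \<Longrightarrow> eval_fword G f [(i, True)] = f i"
  by simp

lemma ev_winv:
  assumes "\<And>i. f i \<in> carrier G"
  shows "eval_fword G f (winv w) = inv (eval_fword G f w)"
  using assms
proof (induction w)
  case Nil
  then show ?case by (simp add: winv_def)
next
  case (Cons p w)
  obtain i b where p: "p = (i, b)" by force
  have "winv (p # w) = winv w @ [(i, \<not> b)]" by (simp add: winv_def p)
  then show ?case using Cons by (simp add: ev_append p inv_mult_group)
qed

lemma ev_cong: "(\<And>p. p \<in> set w \<Longrightarrow> f (fst p) = g (fst p)) \<Longrightarrow> eval_fword G f w = eval_fword G g w"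
proof (induction w)
  case (Cons p w)
  obtain i b where p: "p = (i, b)" by force
  have "f i = g i" using Cons.prems[of p] p by simp
  then show ?case using Cons by (simp add: p)
qed simp

lemma ev_in_sub:
  assumes "subgroup H G" "\<And>i. f i \<in> H"
  shows "eval_fword G f w \<in> H"
  using assms by (induction w) (auto intro!: subgroup.m_closed[OF assms(1)] subgroup.m_inv_closed[OF assms(1)] subgroup.one_closed[OF assms(1)])

lemma ev_sub:
  assumes "subgroup H G" "\<And>i. f i \<in> H"
  shows "eval_fword (G\<lparr>carrier := H\<rparr>) f w = eval_fword G f w"
proof -
  interpret S: group "G\<lparr>carrier := H\<rparr>" using assms(1) by (rule subgroup_imp_group)
  show ?thesis using assms by (induction w) auto
qed


definition Jset :: "(nat \<Rightarrow> 'a) \<Rightarrow> 'a set \<Rightarrow> nat \<Rightarrow> (nat \<Rightarrow> 'a) set \<Rightarrow> 'a set" where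
  "Jset e H N S = {eval_fword G e w | w. (\<forall>p\<in>set w. fst p < N) \<and> eval_fword G e w \<in> H
      \<and> (\<forall>a\<in>S. eval_fword G a w = \<one>)}"

lemma Jset_normal:
  assumes sub: "subgroup H G" and e: "\<And>i. e i \<in> carrier G" and cov: "H \<subseteq> e ` {..<N}"
    and S: "\<And>a i. a \<in> S \<Longrightarrow> a i \<in> H"
  shows "Jset e H N S \<lhd> G\<lparr>carrier := H\<rparr>"
proof -
  interpret K: group "G\<lparr>carrier := H\<rparr>" using sub by (rule subgroup_imp_group)
  have HG: "H \<subseteq> carrier G" using sub subgroup.subset by blast
  have aG: "\<And>a i. a \<in> S \<Longrightarrow> a i \<in> carrier G" using S HG by blast
  have sub1: "Jset e H N S \<subseteq> H" unfolding Jset_def by blast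
  have one: "\<one> \<in> Jset e H N S" unfolding Jset_def
    by (rule CollectI, rule exI[of _ "[]"]) (simp add: subgroup.one_closed[OF sub])
  have inv: "inv x \<in> Jset e H N S" if xJ: "x \<in> Jset e H N S" for x
  proof -
    obtain w where w: "x = eval_fword G e w" "\<forall>p\<in>set w. fst p < N" "eval_fword G e w \<in> H"
      "\<forall>a\<in>S. eval_fword G a w = \<one>" using xJ unfolding Jset_def by blast
    show ?thesis unfolding Jset_def
      apply (rule CollectI, rule exI[of _ "winv w"])
      using w winv_set[of _ w] by (auto simp: ev_winv e aG subgroup.m_inv_closed[OF sub])
  qed
  have mul: "x \<otimes> y \<in> Jset e H N S" if xJ: "x \<in> Jset e H N S" and yJ: "y \<in> Jset e H N S" for x y
  proof -
    obtain w where w: "x = eval_fword G e w" "\<forall>p\<in>set w. fst p < N" "eval_fword G e w \<in> H"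
      "\<forall>a\<in>S. eval_fword G a w = \<one>" using xJ unfolding Jset_def by blast
    obtain v where v: "y = eval_fword G e v" "\<forall>p\<in>set v. fst p < N" "eval_fword G e v \<in> H"
      "\<forall>a\<in>S. eval_fword G a v = \<one>" using yJ unfolding Jset_def by blast
    show ?thesis unfolding Jset_def
      apply (rule CollectI, rule exI[of _ "w @ v"])
      using w v by (auto simp: ev_append e aG subgroup.m_closed[OF sub])
  qed
  have conj: "x \<otimes> h \<otimes> inv x \<in> Jset e H N S" if xH: "x \<in> H" and hJ: "h \<in> Jset e H N S" for x h
  proof -
    obtain w where w: "h = eval_fword G e w" "\<forall>p\<in>set w. fst p < N" "eval_fword G e w \<in> H"
      "\<forall>a\<in>S. eval_fword G a w = \<one>" using hJ unfolding Jset_def by blast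
    obtain i where i: "i < N" "x = e i" using cov xH by force
    define v where "v = [(i, True)] @ w @ winv [(i, True)]"
    have vv: "eval_fword G f v = f i \<otimes> eval_fword G f w \<otimes> inv (f i)" if "\<And>j. f j \<in> carrier G" for f
      unfolding v_def using that by (simp add: ev_append ev_winv m_assoc)
    show ?thesis unfolding Jset_def
      apply (rule CollectI, rule exI[of _ v])
      using w i vv[of e] vv[of a for a] xH HG e aG
      apply (auto simp: v_def winv_def subgroup.m_closed[OF sub] subgroup.m_inv_closed[OF sub])
      done
  qed
  show ?thesis
    unfolding K.normal_inv_iff
  proof (intro conjI ballI)
    show "subgroup (Jset e H N S) (G\<lparr>carrier := H\<rparr>)"
      apply (rule K.subgroupI)
      using sub1 one inv mul sub1 by (auto simp: m_inv_consistent[OF sub] subset_iff)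
  next
    fix x h assume "x \<in> carrier (G\<lparr>carrier := H\<rparr>)" "h \<in> Jset e H N S"
    then show "x \<otimes>\<^bsub>G\<lparr>carrier := H\<rparr>\<^esub> h \<otimes>\<^bsub>G\<lparr>carrier := H\<rparr>\<^esub> inv\<^bsub>G\<lparr>carrier := H\<rparr>\<^esub> x \<in> Jset e H N S"
      using conj by (simp add: m_inv_consistent[OF sub])
  qed
qed


lemma mono_sub:
  assumes "K \<lhd> G\<lparr>carrier := H\<rparr>" "K \<noteq> {\<one>}"
  shows "monolith (G\<lparr>carrier := H\<rparr>) \<subseteq> K"
  using assms unfolding monolith_def by auto

lemma mono_H: "monolith (G\<lparr>carrier := H\<rparr>) \<subseteq> H"
  unfolding monolith_def by auto

lemma comm_one:
  assumes "x \<in> carrier G" "y \<in> carrier G" "x \<otimes> y \<otimes> inv x \<otimes> inv y = \<one>"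
  shows "x \<otimes> y = y \<otimes> x"
proof -
  have a: "inv y \<otimes> (y \<otimes> x) = x" using assms(1,2) by (simp add: m_assoc[symmetric])
  have "x \<otimes> y = x \<otimes> y \<otimes> inv x \<otimes> inv y \<otimes> (y \<otimes> x)"
    using assms(1,2) by (simp add: m_assoc a)
  also have "\<dots> = y \<otimes> x" using assms by simp
  finally show ?thesis .
qed

lemma Jall:
  assumes sub: "subgroup H G" and e: "\<And>i. e i \<in> carrier G" and cov: "H \<subseteq> e ` {..<N}"
    and nab: "nonabelian_set G (monolith (G\<lparr>carrier := H\<rparr>))"
    and all: "\<And>a. (\<forall>i. a i \<in> H) \<Longrightarrow> monolith (G\<lparr>carrier := H\<rparr>) \<subseteq> Jset e H N {a}"
    and fin: "finite S"
  shows "(\<forall>a\<in>S. \<forall>i. a i \<in> H) \<Longrightarrow> monolith (G\<lparr>carrier := H\<rparr>) \<subseteq> Jset e H N S"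
  using fin
proof (induction S rule: finite_induct)
  case empty
  show ?case
  proof
    fix h assume "h \<in> monolith (G\<lparr>carrier := H\<rparr>)"
    then have h: "h \<in> H" using mono_H by blast
    then obtain i where i: "i < N" "h = e i" using cov by force
    show "h \<in> Jset e H N {}" unfolding Jset_def
      by (rule CollectI, rule exI[of _ "[(i, True)]"]) (use i h e in auto)
  qed
next
  case (insert a S)
  let ?M = "monolith (G\<lparr>carrier := H\<rparr>)"
  have HG: "H \<subseteq> carrier G" using sub subgroup.subset by blast
  obtain m1 m2 where m: "m1 \<in> ?M" "m2 \<in> ?M" "m1 \<otimes> m2 \<noteq> m2 \<otimes> m1"
    using nab unfolding nonabelian_set_def by blast
  have mH: "m1 \<in> H" "m2 \<in> H" using m mono_H by blast+
  have "m1 \<in> Jset e H N S" using insert m by blast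
  then obtain w1 where w1: "m1 = eval_fword G e w1" "\<forall>p\<in>set w1. fst p < N"
      "\<forall>b\<in>S. eval_fword G b w1 = \<one>" unfolding Jset_def by blast
  have aH: "\<forall>i. a i \<in> H" using insert by simp
  have "m2 \<in> Jset e H N {a}" using all[OF aH] m by blast
  then obtain w2 where w2: "m2 = eval_fword G e w2" "\<forall>p\<in>set w2. fst p < N"
      "eval_fword G a w2 = \<one>" unfolding Jset_def by blast
  define c where "c = w1 @ w2 @ winv w1 @ winv w2"
  have cv: "eval_fword G f c = eval_fword G f w1 \<otimes> eval_fword G f w2 \<otimes> inv (eval_fword G f w1) \<otimes> inv (eval_fword G f w2)"
    if "\<And>j. f j \<in> carrier G" for f
    unfolding c_def using that by (simp add: ev_append ev_winv m_assoc)
  have bG: "\<And>b j. b \<in> insert a S \<Longrightarrow> b j \<in> carrier G" using insert.prems HG by blast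
  have ce: "eval_fword G e c = m1 \<otimes> m2 \<otimes> inv m1 \<otimes> inv m2" using cv[OF e] w1 w2 by simp
  have cne: "eval_fword G e c \<noteq> \<one>" proof
    assume "eval_fword G e c = \<one>"
    then have "m1 \<otimes> m2 = m2 \<otimes> m1" using comm_one[of m1 m2] ce mH HG by auto
    then show False using m(3) by simp
  qed
  have cH: "eval_fword G e c \<in> H" using ce mH
    by (simp add: subgroup.m_closed[OF sub] subgroup.m_inv_closed[OF sub])
  have call: "\<forall>b\<in>insert a S. eval_fword G b c = \<one>"
  proof
    fix b assume b: "b \<in> insert a S"
    have bc: "\<And>j. b j \<in> carrier G" using bG[OF b] .
    show "eval_fword G b c = \<one>"
    proof (cases "b = a")
      case True
      then show ?thesis using cv[OF bc] w2 bc by simp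
    next
      case False
      then have "b \<in> S" using b by simp
      then show ?thesis using cv[OF bc] w1 bc by simp
    qed
  qed
  have cN: "\<forall>p\<in>set c. fst p < N" unfolding c_def using w1(2) w2(2)
    by (simp only: set_append ball_Un winv_all)
  have cin: "eval_fword G e c \<in> Jset e H N (insert a S)" unfolding Jset_def
    by (rule CollectI, rule exI[of _ c]) (use cN cH call in auto)
  have nrm: "Jset e H N (insert a S) \<lhd> G\<lparr>carrier := H\<rparr>"
    by (rule Jset_normal[OF sub e cov]) (use insert.prems in auto)
  show ?case by (rule mono_sub[OF nrm]) (use cin cne in auto)
qed


lemma finite_A0:
  fixes N :: nat
  assumes "finite H"
  shows "finite {a. (\<forall>i. a i \<in> H) \<and> (\<forall>i. N \<le> i \<longrightarrow> a i = \<one>)}"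
proof (rule finite_subset)
  show "{a. (\<forall>i. a i \<in> H) \<and> (\<forall>i. N \<le> i \<longrightarrow> a i = \<one>)}
     \<subseteq> (\<lambda>g i. if i < N then g i else \<one>) ` (\<Pi>\<^sub>E i\<in>{..<N}. H)"
  proof
    fix a assume a: "a \<in> {a. (\<forall>i. a i \<in> H) \<and> (\<forall>i. N \<le> i \<longrightarrow> a i = \<one>)}"
    have "a i = (if i < N then restrict a {..<N} i else \<one>)" for i
    proof (cases "i < N")
      case False
      then have "N \<le> i" by (simp add: not_less)
      then show ?thesis using a False by simp
    qed simp
    then have "a = (\<lambda>i. if i < N then restrict a {..<N} i else \<one>)" by blast
    moreover have "restrict a {..<N} \<in> (\<Pi>\<^sub>E i\<in>{..<N}. H)" using a by auto
    ultimately show "a \<in> (\<lambda>g i. if i < N then g i else \<one>) ` (\<Pi>\<^sub>E i\<in>{..<N}. H)" by blast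
  qed
  show "finite ((\<lambda>g i. if i < N then g i else \<one>) ` (\<Pi>\<^sub>E i\<in>{..<N}. H))"
    using assms by (intro finite_imageI finite_PiE) auto
qed

lemma exists_a:
  assumes sub: "subgroup H G" and fin: "finite H" and e: "\<And>i. e i \<in> carrier G"
    and cov: "H \<subseteq> e ` {..<N}"
    and nab: "nonabelian_set G (monolith (G\<lparr>carrier := H\<rparr>))"
    and P: "\<And>w. \<forall>p\<in>set w. fst p < N \<Longrightarrow> eval_fword G e w \<in> H \<Longrightarrow> eval_fword G e w \<noteq> \<one>
              \<Longrightarrow> \<exists>b. (\<forall>i. b i \<in> H) \<and> eval_fword G b w \<noteq> \<one>"
  shows "\<exists>a. (\<forall>i. a i \<in> H) \<and> (\<forall>w. (\<forall>p\<in>set w. fst p < N) \<longrightarrow> eval_fword G e w \<in> H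
            \<longrightarrow> eval_fword G a w = \<one> \<longrightarrow> eval_fword G e w = \<one>)"
proof (rule ccontr)
  let ?M = "monolith (G\<lparr>carrier := H\<rparr>)"
  assume neg: "\<not> ?thesis"
  have all: "?M \<subseteq> Jset e H N {a}" if aH: "\<forall>i. a i \<in> H" for a
  proof (rule mono_sub)
    show "Jset e H N {a} \<lhd> G\<lparr>carrier := H\<rparr>"
      by (rule Jset_normal[OF sub e cov]) (use aH in auto)
    obtain w where w: "\<forall>p\<in>set w. fst p < N" "eval_fword G e w \<in> H" "eval_fword G a w = \<one>"
      "eval_fword G e w \<noteq> \<one>" using neg aH by blast
    have "eval_fword G e w \<in> Jset e H N {a}" unfolding Jset_def using w by blast
    then show "Jset e H N {a} \<noteq> {\<one>}" using w(4) by blast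
  qed
  define A0 where "A0 = {a. (\<forall>i. a i \<in> H) \<and> (\<forall>i. N \<le> i \<longrightarrow> a i = \<one>)}"
  have MA: "?M \<subseteq> Jset e H N A0"
    by (rule Jall[OF sub e cov nab all]) (use finite_A0[OF fin] in \<open>auto simp: A0_def\<close>)
  obtain m1 m2 where m: "m1 \<in> ?M" "m2 \<in> ?M" "m1 \<otimes> m2 \<noteq> m2 \<otimes> m1"
    using nab unfolding nonabelian_set_def by blast
  have HG: "H \<subseteq> carrier G" using sub subgroup.subset by blast
  obtain m where mM: "m \<in> ?M" and m1: "m \<noteq> \<one>"
  proof (cases "m1 = \<one>")
    case True
    then have "m2 \<noteq> \<one>" using m(3) m(1) mono_H HG by auto
    then show ?thesis using that m(2) by blast
  next
    case False
    then show ?thesis using that m(1) by blast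
  qed
  have "m \<in> Jset e H N A0" using MA mM by blast
  then obtain w where w: "m = eval_fword G e w" "\<forall>p\<in>set w. fst p < N" "eval_fword G e w \<in> H"
     "\<forall>a\<in>A0. eval_fword G a w = \<one>" unfolding Jset_def by blast
  obtain b where b: "\<forall>i. b i \<in> H" "eval_fword G b w \<noteq> \<one>" using P[OF w(2) w(3)] w(1) m1 by blast
  define a where "a = (\<lambda>i. if i < N then b i else \<one>)"
  have "a \<in> A0" unfolding A0_def a_def using b(1) subgroup.one_closed[OF sub] by auto
  moreover have "eval_fword G a w = eval_fword G b w"
    by (rule ev_cong) (use w(2) in \<open>auto simp: a_def\<close>)
  ultimately show False using w(4) b(2) by auto
qed


lemma cancel_inv:
  assumes "x \<in> carrier G" "y \<in> carrier G" "x \<otimes> inv y = \<one>"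
  shows "x = y"
proof -
  have "x = x \<otimes> inv y \<otimes> y" using assms(1,2) by (simp add: m_assoc)
  also have "\<dots> = y" using assms by simp
  finally show ?thesis .
qed

lemma core:
  assumes sub: "subgroup H G" and fin: "finite H" and e: "\<And>i. e i \<in> carrier G"
    and cov: "H \<subseteq> e ` {..<N}"
    and nab: "nonabelian_set G (monolith (G\<lparr>carrier := H\<rparr>))"
    and P: "\<And>w. \<forall>p\<in>set w. fst p < N \<Longrightarrow> eval_fword G e w \<in> H \<Longrightarrow> eval_fword G e w \<noteq> \<one>
              \<Longrightarrow> \<exists>b. (\<forall>i. b i \<in> H) \<and> eval_fword G b w \<noteq> \<one>"
  shows "\<exists>\<rho>. (\<forall>w. (\<forall>p\<in>set w. fst p < N) \<longrightarrow> \<rho> (eval_fword G e w) \<in> H)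
           \<and> (\<forall>w w'. (\<forall>p\<in>set w. fst p < N) \<longrightarrow> (\<forall>p\<in>set w'. fst p < N) \<longrightarrow>
                \<rho> (eval_fword G e w \<otimes> eval_fword G e w') = \<rho> (eval_fword G e w) \<otimes> \<rho> (eval_fword G e w'))
           \<and> (\<forall>h\<in>H. \<rho> h = h)"
proof -
  have HG: "H \<subseteq> carrier G" using sub subgroup.subset by blast
  obtain a where aH: "\<forall>i. a i \<in> H" and T: "\<And>w. \<forall>p\<in>set w. fst p < N \<Longrightarrow> eval_fword G e w \<in> H
            \<Longrightarrow> eval_fword G a w = \<one> \<Longrightarrow> eval_fword G e w = \<one>"
    using exists_a[OF sub fin e cov nab P] by blast
  have aG: "\<And>i. a i \<in> carrier G" using aH HG by blast
  have avH: "\<And>w. eval_fword G a w \<in> H" using ev_in_sub[OF sub] aH by blast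
  define K where "K = {w. (\<forall>p\<in>set w. fst p < N) \<and> eval_fword G e w \<in> H}"
  have F2: "eval_fword G e w = eval_fword G e w'"
    if w: "w \<in> K" and w': "w' \<in> K" and eq: "eval_fword G a w = eval_fword G a w'" for w w'
  proof -
    let ?v = "w @ winv w'"
    have vN: "\<forall>p\<in>set ?v. fst p < N" using w w' unfolding K_def
      by (simp only: set_append ball_Un winv_all mem_Collect_eq) blast
    have vH: "eval_fword G e ?v \<in> H" using w w' unfolding K_def
      by (simp add: ev_append ev_winv e subgroup.m_closed[OF sub] subgroup.m_inv_closed[OF sub])
    have va: "eval_fword G a ?v = \<one>" using eq by (simp add: ev_append ev_winv aG)
    have "eval_fword G e w \<otimes> inv (eval_fword G e w') = \<one>"
      using T[OF vN vH va] by (simp add: ev_append ev_winv e)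
    then show ?thesis using cancel_inv e by simp
  qed
  define g where "g y = eval_fword G e (SOME w. w \<in> K \<and> eval_fword G a w = y)" for y
  have gP: "g (eval_fword G a w) = eval_fword G e w" if "w \<in> K" for w
  proof -
    let ?u = "SOME u. u \<in> K \<and> eval_fword G a u = eval_fword G a w"
    have "?u \<in> K \<and> eval_fword G a ?u = eval_fword G a w" by (rule someI[of _ w]) (use that in simp)
    then show ?thesis unfolding g_def using F2 that by blast
  qed
  define PP where "PP = (\<lambda>w. eval_fword G a w) ` K"
  have PH: "PP \<subseteq> H" unfolding PP_def using avH by blast
  have single: "[(i, True)] \<in> K \<and> eval_fword G e [(i, True)] = h" if "h \<in> H" "i < N" "h = e i" for h i
    using that e unfolding K_def by simp
  have gimg: "g ` PP = H"
  proof
    show "g ` PP \<subseteq> H" unfolding PP_def using gP K_def by auto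
    show "H \<subseteq> g ` PP"
    proof
      fix h assume h: "h \<in> H"
      then obtain i where i: "i < N" "h = e i" using cov by force
      have "g (eval_fword G a [(i, True)]) = h" using single[OF h i] gP by metis
      moreover have "eval_fword G a [(i, True)] \<in> PP" unfolding PP_def using single[OF h i] by blast
      ultimately show "h \<in> g ` PP" by blast
    qed
  qed
  have finP: "finite PP" using PH fin finite_subset by blast
  have c1: "card H \<le> card PP" using gimg card_image_le[OF finP, of g] by simp
  have c2: "card PP \<le> card H" using PH fin card_mono by blast
  have PeqH: "PP = H" using card_subset_eq[OF fin PH] c1 c2 by simp
  have ginj: "inj_on g PP" using eq_card_imp_inj_on[OF finP, of g] gimg c1 c2 by simp
  have nilK: "[] \<in> K" unfolding K_def using subgroup.one_closed[OF sub] by simp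
  have F1: "eval_fword G a w = \<one>" if wN: "\<forall>p\<in>set w. fst p < N" and w1: "eval_fword G e w = \<one>" for w
  proof -
    have wK: "w \<in> K" unfolding K_def using wN w1 subgroup.one_closed[OF sub] by simp
    have "g (eval_fword G a w) = g (eval_fword G a [])" using gP[OF wK] gP[OF nilK] w1 by simp
    moreover have "eval_fword G a w \<in> PP" "eval_fword G a [] \<in> PP" unfolding PP_def using wK nilK by blast+
    ultimately show ?thesis using ginj inj_on_def by (metis ev_Nil)
  qed
  define \<rho> where "\<rho> x = g (eval_fword G a (SOME w. (\<forall>p\<in>set w. fst p < N) \<and> eval_fword G e w = x))" for x
  have \<rho>e: "\<rho> (eval_fword G e w) = g (eval_fword G a w)" if wN: "\<forall>p\<in>set w. fst p < N" for w
  proof -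
    let ?u = "SOME u. (\<forall>p\<in>set u. fst p < N) \<and> eval_fword G e u = eval_fword G e w"
    have u: "(\<forall>p\<in>set ?u. fst p < N) \<and> eval_fword G e ?u = eval_fword G e w"
      by (rule someI[of _ w]) (use wN in simp)
    let ?v = "?u @ winv w"
    have vN: "\<forall>p\<in>set ?v. fst p < N" using u wN
      by (simp only: set_append ball_Un winv_all) simp
    have "eval_fword G e ?v = \<one>" using u by (simp add: ev_append ev_winv e)
    then have "eval_fword G a ?v = \<one>" using F1[OF vN] by simp
    then have "eval_fword G a ?u = eval_fword G a w"
      using cancel_inv aG by (simp add: ev_append ev_winv)
    then show ?thesis unfolding \<rho>_def by simp
  qed
  have gH: "g y \<in> H" if "y \<in> H" for y using gimg that PeqH by blast
  have gmul: "g (y \<otimes> z) = g y \<otimes> g z" if yH: "y \<in> H" and zH: "z \<in> H" for y z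
  proof -
    obtain u where u: "u \<in> K" "y = eval_fword G a u" using yH PeqH unfolding PP_def by blast
    obtain u' where u': "u' \<in> K" "z = eval_fword G a u'" using zH PeqH unfolding PP_def by blast
    have uu: "u @ u' \<in> K" using u u' unfolding K_def
      by (simp add: ev_append e subgroup.m_closed[OF sub]) blast
    have "g (y \<otimes> z) = g (eval_fword G a (u @ u'))" using u u' by (simp add: ev_append aG)
    also have "\<dots> = eval_fword G e (u @ u')" using gP[OF uu] .
    also have "\<dots> = g y \<otimes> g z" using gP[OF u(1)] gP[OF u'(1)] u u' by (simp add: ev_append e)
    finally show ?thesis .
  qed
  show ?thesis
  proof (intro exI[of _ \<rho>] conjI allI impI ballI)
    fix w :: fword assume "\<forall>p\<in>set w. fst p < N"
    then show "\<rho> (eval_fword G e w) \<in> H" using \<rho>e gH avH by simp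
  next
    fix w w' :: fword assume wN: "\<forall>p\<in>set w. fst p < N" and wN': "\<forall>p\<in>set w'. fst p < N"
    have aN: "\<forall>p\<in>set (w @ w'). fst p < N" using wN wN' by auto
    have "\<rho> (eval_fword G e w \<otimes> eval_fword G e w') = \<rho> (eval_fword G e (w @ w'))"
      by (simp add: ev_append e)
    also have "\<dots> = g (eval_fword G a w \<otimes> eval_fword G a w')" using \<rho>e[OF aN] by (simp add: ev_append aG)
    also have "\<dots> = \<rho> (eval_fword G e w) \<otimes> \<rho> (eval_fword G e w')"
      using gmul avH \<rho>e[OF wN] \<rho>e[OF wN'] by simp
    finally show "\<rho> (eval_fword G e w \<otimes> eval_fword G e w') = \<rho> (eval_fword G e w) \<otimes> \<rho> (eval_fword G e w')" .
  next
    fix h assume h: "h \<in> H"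
    then obtain i where i: "i < N" "h = e i" using cov by force
    have "\<rho> h = \<rho> (eval_fword G e [(i, True)])" using single[OF h i] by simp
    also have "\<dots> = g (eval_fword G a [(i, True)])" by (rule \<rho>e) (use i in simp)
    also have "\<dots> = h" using gP single[OF h i] by metis
    finally show "\<rho> h = h" .
  qed
qed


lemma ew_Nil [simp]: "eval_word G f [] = \<one>"
  by (simp add: eval_word_def)

lemma ew_Cons [simp]: "eval_word G f (l # w) = eval_letter G f l \<otimes> eval_word G f w"
  by (simp add: eval_word_def)

lemma hom_words:
  assumes D1: "\<one> \<in> D" and Dmul: "\<And>x y. x \<in> D \<Longrightarrow> y \<in> D \<Longrightarrow> x \<otimes> y \<in> D"
    and \<rho>mul: "\<And>x y. x \<in> D \<Longrightarrow> y \<in> D \<Longrightarrow> \<rho> (x \<otimes> y) = \<rho> x \<otimes> \<rho> y"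
    and \<rho>1: "\<rho> \<one> = \<one>"
    and Dl: "\<And>l. l \<in> set w \<Longrightarrow> eval_letter G s l \<in> D \<and> \<rho> (eval_letter G s l) = eval_letter G f l"
  shows "eval_word G s w \<in> D \<and> \<rho> (eval_word G s w) = eval_word G f w"
  using Dl
proof (induction w)
  case Nil
  then show ?case using D1 \<rho>1 by simp
next
  case (Cons l w)
  have ih: "eval_word G s w \<in> D \<and> \<rho> (eval_word G s w) = eval_word G f w"
    using Cons.IH Cons.prems by simp
  have hl: "eval_letter G s l \<in> D \<and> \<rho> (eval_letter G s l) = eval_letter G f l"
    using Cons.prems by simp
  have "eval_word G s (l # w) = eval_letter G s l \<otimes> eval_word G s w" by (rule ew_Cons)
  moreover have "eval_word G f (l # w) = eval_letter G f l \<otimes> eval_word G f w" by (rule ew_Cons)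
  ultimately show ?case using Dmul[of "eval_letter G s l" "eval_word G s w"]
      \<rho>mul[of "eval_letter G s l" "eval_word G s w"] ih hl by metis
qed

end

theorem theorem1:
  fixes G :: "('a, 'm) monoid_scheme" and H :: "'a set"
  assumes "group G"
    and "subgroup H G"
    and "finite H"
    and "nonabelian_set G (monolith (subgrp G H))"
  shows "(verbally_closed H G \<longrightarrow> algebraically_closed H G)
       \<and> (finite (carrier G) \<and> satisfies_identities_of G (subgrp G H) \<longrightarrow> retract H G)"
proof -
  interpret G: group G by fact
  note sub = assms(2) and fin = assms(3) and nab = assms(4)
  have HG: "H \<subseteq> carrier G" using sub subgroup.subset by blast
  have part1: "algebraically_closed H G" if vc: "verbally_closed H G"
    unfolding algebraically_closed_def
  proof (intro allI impI)
    fix S :: "'a letter list list"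
    assume cS: "\<forall>w\<in>set S. consts_of w \<subseteq> H"
      and "\<exists>f. (\<forall>i. f i \<in> carrier G) \<and> (\<forall>w\<in>set S. eval_word G f w = \<one>\<^bsub>G\<^esub>)"
    then obtain s where sG: "\<forall>i. s i \<in> carrier G" and sS: "\<forall>w\<in>set S. eval_word G s w = \<one>\<^bsub>G\<^esub>"
      by blast
    define n where "n = sum_list (map mv S)"
    have mvn: "mv w \<le> n" if "w \<in> set S" for w
      unfolding n_def using that by (simp add: member_le_sum_list)
    obtain hs where hs: "set hs = H" using finite_list[OF fin] by blast
    define N where "N = n + length hs"
    define e where "e i = (if i < n then s i else if i < N then hs ! (i - n) else \<one>\<^bsub>G\<^esub>)" for i
    have eG: "e i \<in> carrier G" for i
    proof (cases "i < n")
      case True then show ?thesis using sG unfolding e_def by simp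
    next
      case False
      show ?thesis
      proof (cases "i < N")
        case True
        then have "i - n < length hs" using False unfolding N_def by simp
        then have "hs ! (i - n) \<in> H" using hs nth_mem by blast
        then show ?thesis using HG False True unfolding e_def by auto
      qed (use False in \<open>simp add: e_def\<close>)
    qed
    have cov: "H \<subseteq> e ` {..<N}"
    proof
      fix h assume "h \<in> H"
      then obtain j where j: "j < length hs" "hs ! j = h" using hs by (metis in_set_conv_nth)
      then have "e (n + j) = h" "n + j < N" unfolding e_def N_def by auto
      then show "h \<in> e ` {..<N}" by force
    qed
    have P: "\<exists>b. (\<forall>i. b i \<in> H) \<and> eval_fword G b w \<noteq> \<one>\<^bsub>G\<^esub>"
      if "\<forall>p\<in>set w. fst p < N" "eval_fword G e w \<in> H" "eval_fword G e w \<noteq> \<one>\<^bsub>G\<^esub>" for w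
      using vc that eG unfolding verbally_closed_def by metis
    obtain \<rho> where \<rho>H: "\<forall>w. (\<forall>p\<in>set w. fst p < N) \<longrightarrow> \<rho> (eval_fword G e w) \<in> H"
      and \<rho>m: "\<forall>w w'. (\<forall>p\<in>set w. fst p < N) \<longrightarrow> (\<forall>p\<in>set w'. fst p < N) \<longrightarrow>
                \<rho> (eval_fword G e w \<otimes>\<^bsub>G\<^esub> eval_fword G e w') = \<rho> (eval_fword G e w) \<otimes>\<^bsub>G\<^esub> \<rho> (eval_fword G e w')"
      and \<rho>id: "\<forall>h\<in>H. \<rho> h = h"
      using G.core[OF sub fin eG cov nab P] by blast
    define D where "D = (\<lambda>w. eval_fword G e w) ` {w. \<forall>p\<in>set w. fst p < N}"
    have D1: "\<one>\<^bsub>G\<^esub> \<in> D" unfolding D_def by (rule image_eqI[of _ _ "[]"]) auto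
    have Dmul: "x \<otimes>\<^bsub>G\<^esub> y \<in> D" if xD: "x \<in> D" and yD: "y \<in> D" for x y
    proof -
      obtain w w' where "x = eval_fword G e w" "y = eval_fword G e w'"
        "\<forall>p\<in>set w. fst p < N" "\<forall>p\<in>set w'. fst p < N" using xD yD unfolding D_def by blast
      then show ?thesis unfolding D_def
        by (intro image_eqI[of _ _ "w @ w'"]) (auto simp: G.ev_append eG)
    qed
    have Dinv: "inv\<^bsub>G\<^esub> x \<in> D" if xD: "x \<in> D" for x
    proof -
      obtain w where "x = eval_fword G e w" "\<forall>p\<in>set w. fst p < N" using xD unfolding D_def by blast
      then show ?thesis unfolding D_def
        by (intro image_eqI[of _ _ "winv w"]) (auto simp: G.ev_winv eG)
    qed
    have DG: "x \<in> carrier G" if "x \<in> D" for x using that eG unfolding D_def by auto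
    have \<rho>mul: "\<rho> (x \<otimes>\<^bsub>G\<^esub> y) = \<rho> x \<otimes>\<^bsub>G\<^esub> \<rho> y" if "x \<in> D" "y \<in> D" for x y
      using that \<rho>m unfolding D_def by blast
    have \<rho>D: "\<rho> x \<in> H" if "x \<in> D" for x using that \<rho>H unfolding D_def by blast
    have \<rho>1: "\<rho> \<one>\<^bsub>G\<^esub> = \<one>\<^bsub>G\<^esub>" using \<rho>id subgroup.one_closed[OF sub] by blast
    have \<rho>inv: "\<rho> (inv\<^bsub>G\<^esub> x) = inv\<^bsub>G\<^esub> (\<rho> x)" if xD: "x \<in> D" for x
    proof -
      have "\<rho> (inv\<^bsub>G\<^esub> x) \<otimes>\<^bsub>G\<^esub> \<rho> x = \<one>\<^bsub>G\<^esub>"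
        using \<rho>mul[OF Dinv[OF xD] xD] \<rho>1 DG[OF xD] by simp
      then show ?thesis using \<rho>D[OF xD] \<rho>D[OF Dinv[OF xD]] HG
        by (metis G.inv_equality subsetD)
    qed
    have eD: "e i \<in> D" if "i < N" for i
      unfolding D_def using that eG by (intro image_eqI[of _ _ "[(i, True)]"]) auto
    define f where "f i = (if i < n then \<rho> (s i) else \<one>\<^bsub>G\<^esub>)" for i
    have fH: "\<forall>i. f i \<in> H"
      unfolding f_def using \<rho>D eD subgroup.one_closed[OF sub] unfolding e_def N_def
      by (metis add.commute trans_less_add2)
    have "eval_word G f w = \<one>\<^bsub>G\<^esub>" if wS: "w \<in> set S" for w
    proof -
      have "eval_word G s w \<in> D \<and> \<rho> (eval_word G s w) = eval_word G f w"
      proof (rule G.hom_words[OF D1 Dmul \<rho>mul \<rho>1])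
        fix l assume l: "l \<in> set w"
        show "eval_letter G s l \<in> D \<and> \<rho> (eval_letter G s l) = eval_letter G f l"
        proof (cases l)
          case (Var i b)
          have "i < n" using mv_var[of i b w] l Var mvn[OF wS] by simp
          then have si: "s i \<in> D" "f i = \<rho> (s i)" using eD[of i] unfolding e_def N_def f_def by auto
          then show ?thesis using Var Dinv \<rho>inv by auto
        next
          case (Cst c)
          have "c \<in> H" using cS wS l Cst unfolding consts_of_def by blast
          then have "c \<in> D" "\<rho> c = c" using cov eD \<rho>id by auto
          then show ?thesis using Cst by simp
        qed
      qed
      then show ?thesis using sS wS \<rho>1 by simp
    qed
    then show "\<exists>f. (\<forall>i. f i \<in> H) \<and> (\<forall>w\<in>set S. eval_word G f w = \<one>\<^bsub>G\<^esub>)" using fH by blast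
  qed
  have part2: "retract H G" if finG: "finite (carrier G)" and idt: "satisfies_identities_of G (subgrp G H)"
  proof -
    obtain xs where xs: "set xs = carrier G" using finite_list[OF finG] by blast
    define N where "N = length xs"
    define e where "e i = (if i < N then xs ! i else \<one>\<^bsub>G\<^esub>)" for i
    have eG: "e i \<in> carrier G" for i
    proof (cases "i < N")
      case True
      then have "xs ! i \<in> carrier G" using xs nth_mem unfolding N_def by blast
      then show ?thesis using True unfolding e_def by simp
    qed (simp add: e_def)
    have covG: "carrier G \<subseteq> e ` {..<N}"
    proof
      fix h assume "h \<in> carrier G"
      then obtain j where j: "j < length xs" "xs ! j = h" using xs by (metis in_set_conv_nth)
      then show "h \<in> e ` {..<N}" unfolding e_def N_def by force
    qed
    have cov: "H \<subseteq> e ` {..<N}" using covG HG by blast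
    have P: "\<exists>b. (\<forall>i. b i \<in> H) \<and> eval_fword G b w \<noteq> \<one>\<^bsub>G\<^esub>"
      if "\<forall>p\<in>set w. fst p < N" "eval_fword G e w \<in> H" "eval_fword G e w \<noteq> \<one>\<^bsub>G\<^esub>" for w
    proof (rule ccontr)
      assume "\<not> ?thesis"
      then have "\<forall>f. (\<forall>i. f i \<in> H) \<longrightarrow> eval_fword (subgrp G H) f w = \<one>\<^bsub>subgrp G H\<^esub>"
        using G.ev_sub[OF sub] by auto
      then have "\<forall>f. (\<forall>i. f i \<in> carrier G) \<longrightarrow> eval_fword G f w = \<one>\<^bsub>G\<^esub>"
        using idt unfolding satisfies_identities_of_def by simp
      then have "eval_fword G e w = \<one>\<^bsub>G\<^esub>" using eG by blast
      then show False using that by blast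
    qed
    obtain \<rho> where \<rho>H: "\<forall>w. (\<forall>p\<in>set w. fst p < N) \<longrightarrow> \<rho> (eval_fword G e w) \<in> H"
      and \<rho>m: "\<forall>w w'. (\<forall>p\<in>set w. fst p < N) \<longrightarrow> (\<forall>p\<in>set w'. fst p < N) \<longrightarrow>
                \<rho> (eval_fword G e w \<otimes>\<^bsub>G\<^esub> eval_fword G e w') = \<rho> (eval_fword G e w) \<otimes>\<^bsub>G\<^esub> \<rho> (eval_fword G e w')"
      and \<rho>id: "\<forall>h\<in>H. \<rho> h = h"
      using G.core[OF sub fin eG cov nab P] by blast
    have rep: "\<exists>w. (\<forall>p\<in>set w. fst p < N) \<and> eval_fword G e w = x" if xG: "x \<in> carrier G" for x
    proof -
      obtain i where "i < N" "x = e i" using covG xG by force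
      then show ?thesis using eG by (intro exI[of _ "[(i, True)]"]) auto
    qed
    have \<rho>H': "\<rho> x \<in> H" if "x \<in> carrier G" for x using rep[OF that] \<rho>H by blast
    have \<rho>hom: "\<rho> \<in> hom G G"
    proof (rule homI)
      fix x assume "x \<in> carrier G" then show "\<rho> x \<in> carrier G" using \<rho>H' HG by blast
    next
      fix x y assume "x \<in> carrier G" "y \<in> carrier G"
      then obtain w w' where "(\<forall>p\<in>set w. fst p < N)" "eval_fword G e w = x"
          "(\<forall>p\<in>set w'. fst p < N)" "eval_fword G e w' = y" using rep by metis
      then show "\<rho> (x \<otimes>\<^bsub>G\<^esub> y) = \<rho> x \<otimes>\<^bsub>G\<^esub> \<rho> y" using \<rho>m by blast
    qed
    show ?thesis unfolding retract_def
    proof (intro bexI[OF _ \<rho>hom] conjI ballI)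
      fix x assume "x \<in> carrier G" then show "\<rho> (\<rho> x) = \<rho> x" using \<rho>H' \<rho>id by blast
    next
      show "\<rho> ` carrier G = H" using \<rho>H' \<rho>id HG by force
    qed
  qed
  show ?thesis using part1 part2 by blast
qed

end
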